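(* Let $A,B,D>0$ be constants and let $f:(0,\infty)\to\mathbb{R}$ be defined by $$f(X)=A(2DX)^{-1/2}-B(2DX)^{-3/2}.$$ Set $\tilde{A}=A/(2D)^{1/2}$ and $\tilde{B}=B/(2D)^{3/2}$. Let $\beta>0$ and $\alpha>1$, and let $g:(0,\infty)\to(-\infty,0]$ be given by $g(X)=-\beta X^{\alpha}$. If $$\dot{g}\!\left(\frac{5\tilde{B}}{\tilde{A}}\right)>\dot{f}\!\left(\frac{5\tilde{B}}{\tilde{A}}\right),$$ where the dot denotes the derivative with respect to $X$, then the function $f-g$ (the M-Köhler curve) has at least one local maximum and at least one local minimum on $(0,\infty)$.
   Context: The function $f$ is the Köhler curve written in the variable $X=r^2/(2D)$ (scaled squared droplet radius), and $g$ is a sink term; the condensational growth model is $\dot X=\lambda-(f(X)-g(X))$, and $f-g$ is called the M-Köhler curve. *)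

theory Defs
  imports "HOL-Analysis.Analysis"
begin

text \<open>Koehler curve in the variable X = r^2/(2D).\<close>
definition kohler :: "real \<Rightarrow> real \<Rightarrow> real \<Rightarrow> real \<Rightarrow> real" where
  "kohler A B D X = A * (2 * D * X) powr (-1/2) - B * (2 * D * X) powr (-3/2)"

definition sink :: "real \<Rightarrow> real \<Rightarrow> real \<Rightarrow> real" where
  "sink \<beta> \<alpha> X = - \<beta> * X powr \<alpha>"

definition local_max_on :: "real set \<Rightarrow> (real \<Rightarrow> real) \<Rightarrow> real \<Rightarrow> bool" where
  "local_max_on S h x \<longleftrightarrow> x \<in> S \<and> (\<exists>e>0. \<forall>y\<in>S. \<bar>y - x\<bar> < e \<longrightarrow> h y \<le> h x)"

definition local_min_on :: "real set \<Rightarrow> (real \<Rightarrow> real) \<Rightarrow> real \<Rightarrow> bool" where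
  "local_min_on S h x \<longleftrightarrow> x \<in> S \<and> (\<exists>e>0. \<forall>y\<in>S. \<bar>y - x\<bar> < e \<longrightarrow> h y \<ge> h x)"

end

theory Submission
  imports Defs "HOL-Real_Asymp.Real_Asymp"
begin

lemma lim0: fixes A B D \<beta> \<alpha> :: real assumes "A>0" "B>0" "D>0" "\<beta>>0" "\<alpha>>1"
 shows "filterlim (\<lambda>X. kohler A B D X - sink \<beta> \<alpha> X) at_bot (at_right 0)"
  unfolding kohler_def sink_def using assms by real_asymp

lemma liminf: fixes A B D \<beta> \<alpha> :: real assumes "A>0" "B>0" "D>0" "\<beta>>0" "\<alpha>>1"
 shows "filterlim (\<lambda>X. kohler A B D X - sink \<beta> \<alpha> X) at_top at_top"
  unfolding kohler_def sink_def using assms by real_asymp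

lemma kdiff: fixes A B D :: real assumes "D>0" "x>0"
  shows "kohler A B D differentiable at x"
proof -
  have "((\<lambda>X. A * (2 * D * X) powr (-1/2) - B * (2 * D * X) powr (-3/2)) has_real_derivative
     (A * ((-1/2) * (2*D*x) powr (-1/2 - 1) * (2*D)) - B * ((-3/2) * (2*D*x) powr (-3/2 - 1) * (2*D)))) (at x)"
    using assms by (auto intro!: derivative_eq_intros)
  then show ?thesis unfolding kohler_def[abs_def] using real_differentiable_def by blast
qed

lemma sdiff: fixes \<beta> \<alpha> :: real assumes "x>0"
  shows "sink \<beta> \<alpha> differentiable at x"
proof -
  have "((\<lambda>X. - \<beta> * X powr \<alpha>) has_real_derivative (- \<beta> * (\<alpha> * x powr (\<alpha> - 1)))) (at x)"
    using assms by (auto intro!: derivative_eq_intros)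
  then show ?thesis unfolding sink_def[abs_def] using real_differentiable_def by blast
qed

lemma hcont: fixes A B D \<beta> \<alpha> :: real assumes "D>0" "a>0"
  shows "continuous_on {a..b} (\<lambda>X. kohler A B D X - sink \<beta> \<alpha> X)"
  unfolding kohler_def sink_def using assms
  by (intro continuous_intros) auto

theorem proposition1:
  fixes A B D \<beta> \<alpha> :: real
  assumes "A > 0" and "B > 0" and "D > 0" and "\<beta> > 0" and "\<alpha> > 1"
    and "deriv (sink \<beta> \<alpha>) (5 * (B / (2*D) powr (3/2)) / (A / (2*D) powr (1/2)))
         > deriv (kohler A B D) (5 * (B / (2*D) powr (3/2)) / (A / (2*D) powr (1/2)))"
  shows "(\<exists>x. local_max_on {0<..} (\<lambda>X. kohler A B D X - sink \<beta> \<alpha> X) x)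
       \<and> (\<exists>x. local_min_on {0<..} (\<lambda>X. kohler A B D X - sink \<beta> \<alpha> X) x)"
proof -
  define X0 where "X0 = 5 * (B / (2*D) powr (3/2)) / (A / (2*D) powr (1/2))"
  define h where "h = (\<lambda>X. kohler A B D X - sink \<beta> \<alpha> X)"
  have X0: "X0 > 0" unfolding X0_def using assms by auto
  have dk: "(kohler A B D has_real_derivative deriv (kohler A B D) X0) (at X0)"
    using kdiff[OF assms(3) X0] DERIV_deriv_iff_real_differentiable by blast
  have ds: "(sink \<beta> \<alpha> has_real_derivative deriv (sink \<beta> \<alpha>) X0) (at X0)"
    using sdiff[OF X0] DERIV_deriv_iff_real_differentiable by blast
  have dh: "(h has_real_derivative (deriv (kohler A B D) X0 - deriv (sink \<beta> \<alpha>) X0)) (at X0)"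
    unfolding h_def using DERIV_diff[OF dk ds] by simp
  have neg: "deriv (kohler A B D) X0 - deriv (sink \<beta> \<alpha>) X0 < 0"
    using assms(6) unfolding X0_def by simp
  obtain d1 where d1: "d1 > 0" "\<And>k. k > 0 \<Longrightarrow> k < d1 \<Longrightarrow> h X0 < h (X0 - k)"
    using DERIV_neg_dec_left[OF dh neg] by blast
  obtain d2 where d2: "d2 > 0" "\<And>k. k > 0 \<Longrightarrow> k < d2 \<Longrightarrow> h (X0 + k) < h X0"
    using DERIV_neg_dec_right[OF dh neg] by blast
  define x1 where "x1 = X0 - min (d1/2) (X0/2)"
  define x2 where "x2 = X0 + d2/2"
  have x1: "0 < x1" "x1 < X0" "h X0 < h x1"
    using d1 X0 unfolding x1_def by auto
  have x2: "X0 < x2" "h x2 < h X0"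
    using d2 X0 unfolding x2_def by auto
  have ev0: "eventually (\<lambda>x. h x \<le> h X0 - 1) (at_right 0)"
    using lim0[OF assms(1-5)] unfolding h_def filterlim_at_bot by blast
  have ev0': "eventually (\<lambda>x. x \<in> {0<..<x1}) (at_right (0::real))"
    using eventually_at_right_real[OF x1(1)] .
  obtain e where e: "h e \<le> h X0 - 1" "e \<in> {0<..<x1}"
    using eventually_happens'[OF _ eventually_conj[OF ev0 ev0']] by auto
  have ev1: "eventually (\<lambda>x. h x \<ge> h X0 + 1) at_top"
    using liminf[OF assms(1-5)] unfolding h_def filterlim_at_top by blast
  have ev1': "eventually (\<lambda>x. x > x2) at_top"
    by (rule eventually_gt_at_top)
  obtain M where M: "h M \<ge> h X0 + 1" "M > x2"
    using eventually_happens'[OF _ eventually_conj[OF ev1 ev1']] by auto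
  have c1: "continuous_on {e..X0} h" unfolding h_def using hcont assms e by auto
  obtain xm where xm: "xm \<in> {e..X0}" "\<And>y. y \<in> {e..X0} \<Longrightarrow> h y \<le> h xm"
    using continuous_attains_sup[OF compact_Icc _ c1] e x1 by auto
  have "h x1 \<le> h xm" using xm(2)[of x1] e x1 by auto
  then have xmi: "e < xm" "xm < X0" using xm(1) e x1 by (auto simp: order.order_iff_strict)
  have c2: "continuous_on {X0..M} h" unfolding h_def using hcont assms X0 by auto
  obtain xn where xn: "xn \<in> {X0..M}" "\<And>y. y \<in> {X0..M} \<Longrightarrow> h xn \<le> h y"
    using continuous_attains_inf[OF compact_Icc _ c2] M x2 by auto
  have "h xn \<le> h x2" using xn(2)[of x2] M x2 by auto
  then have xni: "X0 < xn" "xn < M" using xn(1) M x2 by (auto simp: order.order_iff_strict)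
  have "local_max_on {0<..} h xm"
    unfolding local_max_on_def
  proof (intro conjI exI[of _ "min (xm - e) (X0 - xm)"] ballI impI)
    show "xm \<in> {0<..}" using xmi e by auto
    show "0 < min (xm - e) (X0 - xm)" using xmi by auto
    fix y assume "y \<in> {0<..}" "\<bar>y - xm\<bar> < min (xm - e) (X0 - xm)"
    then show "h y \<le> h xm" using xm(2)[of y] by (auto simp: abs_less_iff)
  qed
  moreover have "local_min_on {0<..} h xn"
    unfolding local_min_on_def
  proof (intro conjI exI[of _ "min (xn - X0) (M - xn)"] ballI impI)
    show "xn \<in> {0<..}" using xni X0 by auto
    show "0 < min (xn - X0) (M - xn)" using xni by auto
    fix y assume "y \<in> {0<..}" "\<bar>y - xn\<bar> < min (xn - X0) (M - xn)"
    then show "h xn \<le> h y" using xn(2)[of y] by (auto simp: abs_less_iff)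
  qed
  ultimately show ?thesis unfolding h_def by blast
qed

end
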